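(* Let $G$ be a finite group and let $R(G)$ be its solvable radical. For $g\in G$, we have $g\notin R(G)$ if and only if there exist an integer $n\ge 1$ and elements $x_1,\dots,x_n\in G$ such that the subgroup $\langle [g,x_1],\dots,[g,x_n]\rangle$ is not solvable.
   Context: The commutator is $[x,y]=xyx^{-1}y^{-1}$. The solvable radical $R(G)$ is the largest solvable normal subgroup of $G$. *)

theory Defs
  imports "HOL-Algebra.Algebra"
begin

definition commutator :: "('a, 'b) monoid_scheme \<Rightarrow> 'a \<Rightarrow> 'a \<Rightarrow> 'a" where
  "commutator G x y = x \<otimes>\<^bsub>G\<^esub> y \<otimes>\<^bsub>G\<^esub> inv\<^bsub>G\<^esub> x \<otimes>\<^bsub>G\<^esub> inv\<^bsub>G\<^esub> y"

definition is_solvable_radical :: "('a, 'b) monoid_scheme \<Rightarrow> 'a set \<Rightarrow> bool" where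
  "is_solvable_radical G R \<longleftrightarrow>
     R \<lhd> G \<and> solvable (G\<lparr>carrier := R\<rparr>) \<and>
     (\<forall>N. N \<lhd> G \<and> solvable (G\<lparr>carrier := N\<rparr>) \<longrightarrow> N \<subseteq> R)"

end

theory Submission
  imports Defs
begin

context group begin
lemma cx1: "x \<in> carrier G \<Longrightarrow> y \<in> carrier G \<Longrightarrow> inv x \<otimes> (x \<otimes> y) = y"
  by (simp add: m_assoc[symmetric])
lemma cx2: "x \<in> carrier G \<Longrightarrow> y \<in> carrier G \<Longrightarrow> x \<otimes> (inv x \<otimes> y) = y"
  by (simp add: m_assoc[symmetric])
lemma i1: "x \<in> carrier G \<Longrightarrow> y \<in> carrier G \<Longrightarrow> g \<in> carrier G \<Longrightarrow> x \<otimes> (g\<otimes>y\<otimes>inv g\<otimes>inv y) \<otimes> inv x = inv (g\<otimes>x\<otimes>inv g\<otimes>inv x) \<otimes> (g\<otimes>(x\<otimes>y)\<otimes>inv g\<otimes>inv(x\<otimes>y))"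
  by (simp add: m_assoc inv_mult_group cx1 cx2)
lemma i2: "a \<in> carrier G \<Longrightarrow> b \<in> carrier G \<Longrightarrow> z \<in> carrier G \<Longrightarrow> a\<otimes>b \<otimes> z \<otimes> inv(a\<otimes>b) \<otimes> inv z = (a \<otimes> (b\<otimes>z\<otimes>inv b\<otimes>inv z) \<otimes> inv a) \<otimes> (a\<otimes>z\<otimes>inv a\<otimes>inv z)"
  by (simp add: m_assoc inv_mult_group cx1 cx2)
lemma i3: "a \<in> carrier G \<Longrightarrow> z \<in> carrier G \<Longrightarrow> inv a \<otimes> z \<otimes> inv (inv a) \<otimes> inv z = inv a \<otimes> inv(a\<otimes>z\<otimes>inv a\<otimes>inv z) \<otimes> a"
  by (simp add: m_assoc inv_mult_group cx1 cx2)
lemma i4: "x \<in> carrier G \<Longrightarrow> y \<in> carrier G \<Longrightarrow> z \<in> carrier G \<Longrightarrow> (x\<otimes>y\<otimes>inv x) \<otimes> z \<otimes> inv(x\<otimes>y\<otimes>inv x) \<otimes> inv z = x \<otimes> (y \<otimes> (inv x \<otimes> z \<otimes> x) \<otimes> inv y \<otimes> inv (inv x \<otimes> z \<otimes> x)) \<otimes> inv x"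
  by (simp add: m_assoc inv_mult_group cx1 cx2)
end

lemma (in group) solvable_sub_iff:
  assumes H: "subgroup H G"
  shows "solvable (G\<lparr>carrier := H\<rparr>) \<longleftrightarrow> solvable_seq G H"
proof -
  have gh: "group_hom (G\<lparr>carrier := H\<rparr>) G id"
    unfolding group_hom_def group_hom_axioms_def
    using subgroup_imp_group[OF H] is_group H
    using subgroup.mem_carrier[OF H] by (auto simp: hom_def)
  show ?thesis
  proof
    assume "solvable (G\<lparr>carrier := H\<rparr>)"
    then have "solvable_seq G (id ` H)"
      using group_hom.solvable_imp_solvable_img[OF gh] by (simp add: solvable_def)
    then show "solvable_seq G H" by simp
  next
    assume "solvable_seq G H"
    then show "solvable (G\<lparr>carrier := H\<rparr>)"
      using group_hom.solvable_img_imp_solvable[OF gh, of H]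
        group.subgroup_self[OF subgroup_imp_group[OF H]]
      by (simp add: solvable_def)
  qed
qed

lemma (in group) solvable_seq_mono:
  assumes "solvable_seq G H" "subgroup K G" "K \<subseteq> H"
  shows "solvable_seq G K"
proof -
  obtain n where n: "(derived G ^^ n) H = { \<one> }"
    using solvable_imp_trivial_derived_seq[OF assms(1)] by blast
  show ?thesis
    apply (rule trivial_derived_seq_imp_solvable[OF assms(2), of n])
    using subgroup.one_closed[OF exp_of_derived_is_subgroup[OF assms(2)], of n]
            mono_exp_of_derived[OF assms(3), of n] n
    by auto
qed

lemma (in group) solvable_seq_derived_sub:
  assumes "solvable_seq G K" "subgroup Z G" "derived G Z \<subseteq> K"
  shows "solvable_seq G Z"
proof -
  obtain n where n: "(derived G ^^ n) K = { \<one> }"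
    using solvable_imp_trivial_derived_seq[OF assms(1)] by blast
  show ?thesis
    apply (rule trivial_derived_seq_imp_solvable[OF assms(2), of "Suc n"])
    using subgroup.one_closed[OF exp_of_derived_is_subgroup[OF assms(2)], of "Suc n"]
            mono_exp_of_derived[OF assms(3), of n] n
    by (auto simp: funpow_swap1)
qed

lemma (in group) main_lemma:
  assumes "finite (carrier G)"
    and "is_solvable_radical G R"
    and "g \<in> carrier G"
  shows "g \<notin> R \<longleftrightarrow>
    (\<exists>n::nat. n \<ge> 1 \<and> (\<exists>x. (\<forall>i\<in>{1..n}. x i \<in> carrier G) \<and>
       \<not> solvable (subgroup_generated G {commutator G g (x i) | i. i \<in> {1..n}})))"
proof -
  have gG: "g \<in> carrier G" by fact
  have RN: "R \<lhd> G" and RS0: "solvable (G\<lparr>carrier := R\<rparr>)"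
    and Rmax: "\<And>N. N \<lhd> G \<Longrightarrow> solvable (G\<lparr>carrier := N\<rparr>) \<Longrightarrow> N \<subseteq> R"
    using assms(2) unfolding is_solvable_radical_def by auto
  have Rsub: "subgroup R G" using RN normal_imp_subgroup by blast
  have RS: "solvable_seq G R" using RS0 solvable_sub_iff[OF Rsub] by simp
  have Rconj: "\<And>x h. x \<in> carrier G \<Longrightarrow> h \<in> R \<Longrightarrow> x \<otimes> h \<otimes> inv x \<in> R"
    using RN normal_inv_iff by blast
  have comm_carr: "\<And>y. y \<in> carrier G \<Longrightarrow> commutator G g y \<in> carrier G"
    using gG by (simp add: commutator_def)
  show ?thesis
  proof
    assume gR: "g \<notin> R"
    show "\<exists>n::nat. n \<ge> 1 \<and> (\<exists>x. (\<forall>i\<in>{1..n}. x i \<in> carrier G) \<and>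
       \<not> solvable (subgroup_generated G {commutator G g (x i) | i. i \<in> {1..n}}))"
    proof (rule ccontr)
      assume H: "\<not> ?thesis"
      obtain h where h: "bij_betw h {1..card (carrier G)} (carrier G)"
        using ex_bij_betw_nat_finite_1[OF assms(1)] by blast
      have c1: "card (carrier G) \<ge> 1"
        using assms(1) one_closed by (metis card_0_eq empty_iff less_one not_le)
      have hc: "\<forall>i\<in>{1..card (carrier G)}. h i \<in> carrier G"
        using h bij_betwE by blast
      define C where "C = {commutator G g y | y. y \<in> carrier G}"
      have Ceq: "{commutator G g (h i) | i. i \<in> {1..card (carrier G)}} = C"
      proof -
        have "h ` {1..card (carrier G)} = carrier G" using h by (simp add: bij_betw_def)
        moreover have "{commutator G g (h i) | i. i \<in> {1..card (carrier G)}} = commutator G g ` (h ` {1..card (carrier G)})"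
          by blast
        moreover have "C = commutator G g ` carrier G" unfolding C_def by blast
        ultimately show ?thesis by simp
      qed
      have CG: "C \<subseteq> carrier G" using comm_carr C_def by auto
      define K where "K = generate G C"
      have Ksub: "subgroup K G" unfolding K_def using generate_is_subgroup[OF CG] .
      have "solvable (subgroup_generated G C)"
        using H c1 hc Ceq by blast
      then have KS: "solvable_seq G K"
        using solvable_sub_iff[OF Ksub] CG unfolding subgroup_generated_def K_def
        by (simp add: Int_absorb1)
      have conjC: "x \<otimes> c \<otimes> inv x \<in> K" if xG: "x \<in> carrier G" and c: "c \<in> C" for x c
      proof -
        obtain y where y: "y \<in> carrier G" "c = commutator G g y" using c C_def by auto
        have "x \<otimes> c \<otimes> inv x = inv (commutator G g x) \<otimes> commutator G g (x \<otimes> y)"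
          using i1[OF xG y(1) gG] y by (simp add: commutator_def)
        moreover have "commutator G g x \<in> K" "commutator G g (x \<otimes> y) \<in> K"
          using xG y unfolding K_def C_def by (auto intro!: generate.incl)
        ultimately show ?thesis
          using Ksub subgroup.m_closed subgroup.m_inv_closed by metis
      qed
      have Kconj: "x \<otimes> w \<otimes> inv x \<in> K" if xG: "x \<in> carrier G" and w: "w \<in> K" for x w
        using w unfolding K_def
      proof (induction w rule: generate.induct)
        case one
        then show ?case using xG generate.one by simp
      next
        case (incl c)
        then show ?case using conjC[OF xG] K_def by simp
      next
        case (inv c)
        then have cG: "c \<in> carrier G" using CG by auto
        have "x \<otimes> inv c \<otimes> inv x = inv (x \<otimes> c \<otimes> inv x)"
          using xG cG by (simp add: inv_mult_group m_assoc)
        moreover have "x \<otimes> c \<otimes> inv x \<in> K"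
          using inv conjC[OF xG] by simp
        ultimately show ?case using Ksub K_def subgroup.m_inv_closed by metis
      next
        case (eng a b)
        have aG: "a \<in> carrier G" "b \<in> carrier G"
          using eng(1,2) generate_in_carrier[OF CG] by auto
        have "x \<otimes> (a \<otimes> b) \<otimes> inv x = (x \<otimes> a \<otimes> inv x) \<otimes> (x \<otimes> b \<otimes> inv x)"
          using xG aG by (simp add: m_assoc cx1)
        then show ?case using eng(3,4) Ksub K_def subgroup.m_closed by metis
      qed
      define Z where "Z = {y \<in> carrier G. \<forall>z\<in>carrier G. y \<otimes> z \<otimes> inv y \<otimes> inv z \<in> K}"
      have ZG: "Z \<subseteq> carrier G" unfolding Z_def by auto
      have gZ: "g \<in> Z"
        unfolding Z_def K_def C_def using gG
        by (auto intro!: generate.incl simp: commutator_def)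
      have Zsub: "subgroup Z G"
      proof (rule subgroupI)
        show "Z \<subseteq> carrier G" by (rule ZG)
        show "Z \<noteq> {}" using gZ by auto
      next
        fix a assume a: "a \<in> Z"
        then have aG: "a \<in> carrier G" using ZG by auto
        show "inv a \<in> Z" unfolding Z_def
        proof (intro CollectI conjI ballI)
          show "inv a \<in> carrier G" using aG by simp
          fix z assume z: "z \<in> carrier G"
          have "a \<otimes> z \<otimes> inv a \<otimes> inv z \<in> K" using a z Z_def by auto
          then have "inv (a \<otimes> z \<otimes> inv a \<otimes> inv z) \<in> K" using Ksub subgroup.m_inv_closed by metis
          then have "inv a \<otimes> inv (a \<otimes> z \<otimes> inv a \<otimes> inv z) \<otimes> inv (inv a) \<in> K"
            using Kconj[of "inv a"] aG by (metis inv_closed inv_inv)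
          then show "inv a \<otimes> z \<otimes> inv (inv a) \<otimes> inv z \<in> K"
            using i3[OF aG z] aG by simp
        qed
      next
        fix a b assume a: "a \<in> Z" and b: "b \<in> Z"
        then have aG: "a \<in> carrier G" "b \<in> carrier G" using ZG by auto
        show "a \<otimes> b \<in> Z" unfolding Z_def
        proof (intro CollectI conjI ballI)
          show "a \<otimes> b \<in> carrier G" using aG by simp
          fix z assume z: "z \<in> carrier G"
          have "a \<otimes> z \<otimes> inv a \<otimes> inv z \<in> K" "b \<otimes> z \<otimes> inv b \<otimes> inv z \<in> K"
            using a b z Z_def by auto
          then have "(a \<otimes> (b\<otimes>z\<otimes>inv b\<otimes>inv z) \<otimes> inv a) \<otimes> (a\<otimes>z\<otimes>inv a\<otimes>inv z) \<in> K"
            using Kconj aG Ksub subgroup.m_closed by metis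
          then show "a \<otimes> b \<otimes> z \<otimes> inv (a \<otimes> b) \<otimes> inv z \<in> K"
            using i2[OF aG z] by simp
        qed
      qed
      have ZN: "Z \<lhd> G"
        unfolding normal_inv_iff
      proof (intro conjI ballI)
        show "subgroup Z G" by (rule Zsub)
        fix x y assume x: "x \<in> carrier G" and y: "y \<in> Z"
        then have yG: "y \<in> carrier G" using ZG by auto
        show "x \<otimes> y \<otimes> inv x \<in> Z" unfolding Z_def
        proof (intro CollectI conjI ballI)
          show "x \<otimes> y \<otimes> inv x \<in> carrier G" using x yG by simp
          fix z assume z: "z \<in> carrier G"
          have "inv x \<otimes> z \<otimes> x \<in> carrier G" using x z by simp
          then have "y \<otimes> (inv x \<otimes> z \<otimes> x) \<otimes> inv y \<otimes> inv (inv x \<otimes> z \<otimes> x) \<in> K"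
            using y Z_def by auto
          then have "x \<otimes> (y \<otimes> (inv x \<otimes> z \<otimes> x) \<otimes> inv y \<otimes> inv (inv x \<otimes> z \<otimes> x)) \<otimes> inv x \<in> K"
            using Kconj x by blast
          then show "x \<otimes> y \<otimes> inv x \<otimes> z \<otimes> inv (x \<otimes> y \<otimes> inv x) \<otimes> inv z \<in> K"
            using i4[OF x yG z] by simp
        qed
      qed
      have "derived G Z \<subseteq> K"
        unfolding derived_def
        by (rule generate_subgroup_incl[OF _ Ksub]) (auto simp: Z_def)
      then have "solvable_seq G Z"
        using solvable_seq_derived_sub[OF KS Zsub] by blast
      then have "Z \<subseteq> R"
        using Rmax[OF ZN] solvable_sub_iff[OF Zsub] by blast
      then show False using gZ gR by blast
    qed
  next
    assume "\<exists>n::nat. n \<ge> 1 \<and> (\<exists>x. (\<forall>i\<in>{1..n}. x i \<in> carrier G) \<and>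
       \<not> solvable (subgroup_generated G {commutator G g (x i) | i. i \<in> {1..n}}))"
    then obtain n :: nat and x :: "nat \<Rightarrow> 'a" where x: "\<forall>i\<in>{1..n}. x i \<in> carrier G"
      and ns: "\<not> solvable (subgroup_generated G {commutator G g (x i) | i. i \<in> {1..n}})"
      by blast
    show "g \<notin> R"
    proof
      assume gR: "g \<in> R"
      define S where "S = {commutator G g (x i) | i. i \<in> {1..n}}"
      have SR: "S \<subseteq> R"
      proof
        fix c assume "c \<in> S"
        then obtain i where i: "i \<in> {1..n}" "c = commutator G g (x i)" using S_def by auto
        have xi: "x i \<in> carrier G" using x i by auto
        have "inv g \<in> R" using gR Rsub subgroup.m_inv_closed by metis
        then have "x i \<otimes> inv g \<otimes> inv (x i) \<in> R" using Rconj xi by blast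
        then have "g \<otimes> (x i \<otimes> inv g \<otimes> inv (x i)) \<in> R" using gR Rsub subgroup.m_closed by metis
        then show "c \<in> R" using i gG xi by (simp add: commutator_def m_assoc)
      qed
      define L where "L = generate G (carrier G \<inter> S)"
      have Lsub: "subgroup L G" unfolding L_def by (rule generate_is_subgroup) auto
      have "L \<subseteq> R" unfolding L_def using SR by (intro generate_subgroup_incl[OF _ Rsub]) auto
      then have "solvable_seq G L" using solvable_seq_mono[OF RS Lsub] by blast
      then have "solvable (subgroup_generated G S)"
        using solvable_sub_iff[OF Lsub] unfolding subgroup_generated_def L_def by simp
      then show False using ns S_def by simp
    qed
  qed
qed


theorem corollary1p13:
  fixes G :: "('a, 'b) monoid_scheme" and R :: "'a set" and g :: 'a
  assumes "group G" and "finite (carrier G)"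
    and "is_solvable_radical G R"
    and "g \<in> carrier G"
  shows "g \<notin> R \<longleftrightarrow>
    (\<exists>n::nat. n \<ge> 1 \<and> (\<exists>x. (\<forall>i\<in>{1..n}. x i \<in> carrier G) \<and>
       \<not> solvable (subgroup_generated G {commutator G g (x i) | i. i \<in> {1..n}})))"
  using group.main_lemma[OF assms(1) assms(2) assms(3) assms(4)] .

end
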